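(* For all graphs $G$ and $H$: if $G$ and $H$ are distinguishable by EB-1WL, then there exist $d\ge1$, $t\ge1$ and a $d$-dimensional EB-GNN $\mathcal{T}$ with $t$ layers such that $\mathcal{T}(G)\neq\mathcal{T}(H)$.
   Context: All graphs are finite, simple and undirected, without isolated vertices; $N(v)$ denotes the neighborhood of $v$. An ordered edge of $G=(V,E)$ is a pair $(u,v)$ with $\{u,v\}\in E$. EB-1WL coloring: $\mathrm{eb}^{(0)}(G,(u,v))=1$ for every ordered edge, and $\mathrm{eb}^{(\ell+1)}(G,(u,v)) = \big(\mathrm{eb}^{(\ell)}(G,(u,v)),\ \{\!\{\mathrm{eb}^{(\ell)}(G,(u,x)) : x\in N(u)\}\!\},\ \{\!\{(\mathrm{eb}^{(\ell)}(G,(u,y)),\mathrm{eb}^{(\ell)}(G,(v,y))) : y\in N(u)\cap N(v)\}\!\},\ \{\!\{\mathrm{eb}^{(\ell)}(G,(v,z)) : z\in N(v)\}\!\}\big)$. $\mathrm{eb}^{(\ell)}(G)$ is the multiset of $\mathrm{eb}^{(\ell)}(G,(u,v))$ over all ordered edges. Graphs are distinguishable by EB-1WL if they have different numbers of vertices or there is $\ell$ with $\mathrm{eb}^{(\ell)}(G)\neq\mathrm{eb}^{(\ell)}(H)$. EB-GNN: a $d$-dimensional EB-GNN $\mathcal{T}$ with $t$ layers is given by real parameters $a_i,b_i,c_i,u_i,v_i\in\mathbb{R}^d$, $A_i,C_i,U_i,V_i\in\mathbb{R}^{d\times d}$, $B_i\in\mathbb{R}^{d\times 2d}$ for $i=1,\dots,t$.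 On $G$ it computes for every ordered edge $(u,v)$: $f^{(0)}(u,v)=(1,0,\dots,0)^T\in\mathbb{R}^d$, and for $1\le i\le t$: $\alpha^{(i)}(u)=\sum_{x\in N(u)}\mathrm{ReLU}(A_if^{(i-1)}(u,x)+a_i)$, $\beta^{(i)}(u,v)=\sum_{y\in N(u)\cap N(v)}\mathrm{ReLU}\big(B_i\binom{f^{(i-1)}(u,y)}{f^{(i-1)}(v,y)}+b_i\big)$, $\gamma^{(i)}(v)=\sum_{z\in N(v)}\mathrm{ReLU}(C_if^{(i-1)}(v,z)+c_i)$, $g^{(i)}(u,v)=f^{(i-1)}(u,v)+\alpha^{(i)}(u)+\beta^{(i)}(u,v)+\gamma^{(i)}(v)$, $f^{(i)}(u,v)=g^{(i)}(u,v)+V_i\,\mathrm{ReLU}(U_ig^{(i)}(u,v)+u_i)+v_i$, where $\mathrm{ReLU}(x)=\max\{0,x\}$ coordinatewise. The output is $\mathcal{T}(G)=\sum_{(u,v):\{u,v\}\in E}f^{(t)}(u,v)$ (sum over ordered edges). *)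

theory Defs
  imports Complex_Main "HOL-Library.Multiset"
begin

text \<open>A finite simple undirected graph without isolated vertices is given by its
finite edge set E of 2-element vertex sets; its vertex set is the union of the edges.\<close>

definition simple_graph :: "'a set set \<Rightarrow> bool" where
  "simple_graph E \<longleftrightarrow> finite E \<and> (\<forall>e\<in>E. card e = 2)"

definition verts :: "'a set set \<Rightarrow> 'a set" where
  "verts E = \<Union>E"

definition nbhd :: "'a set set \<Rightarrow> 'a \<Rightarrow> 'a set" where
  "nbhd E u = {x. {u, x} \<in> E}"

definition oedges :: "'a set set \<Rightarrow> ('a \<times> 'a) set" where
  "oedges E = {(u, v). {u, v} \<in> E}"

datatype color = Init | Col color "color multiset" "(color \<times> color) multiset" "color multiset"

fun eb :: "'a set set \<Rightarrow> nat \<Rightarrow> 'a \<times> 'a \<Rightarrow> color" where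
  "eb E 0 (u, v) = Init"
| "eb E (Suc l) (u, v) =
     Col (eb E l (u, v))
         (image_mset (\<lambda>x. eb E l (u, x)) (mset_set (nbhd E u)))
         (image_mset (\<lambda>y. (eb E l (u, y), eb E l (v, y))) (mset_set (nbhd E u \<inter> nbhd E v)))
         (image_mset (\<lambda>z. eb E l (v, z)) (mset_set (nbhd E v)))"

definition eb_colors :: "'a set set \<Rightarrow> nat \<Rightarrow> color multiset" where
  "eb_colors E l = image_mset (eb E l) (mset_set (oedges E))"

definition eb_distinguishable :: "'a set set \<Rightarrow> 'b set set \<Rightarrow> bool" where
  "eb_distinguishable G H \<longleftrightarrow>
     card (verts G) \<noteq> card (verts H) \<or> (\<exists>l. eb_colors G l \<noteq> eb_colors H l)"

text \<open>Vectors in R^d are functions nat => real of which only the coordinates < d matter;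
all operations only read coordinates < d. Parameters are indexed by the layer number i
(1-based); vectors are nat => real, d x d matrices nat => nat => real (row, column);
for B (d x 2d) column j < d acts on the first block and column d + j on the second.\<close>

record gnn_params =
  pa :: "nat \<Rightarrow> nat \<Rightarrow> real"
  pb :: "nat \<Rightarrow> nat \<Rightarrow> real"
  pc :: "nat \<Rightarrow> nat \<Rightarrow> real"
  pu :: "nat \<Rightarrow> nat \<Rightarrow> real"
  pv :: "nat \<Rightarrow> nat \<Rightarrow> real"
  pA :: "nat \<Rightarrow> nat \<Rightarrow> nat \<Rightarrow> real"
  pB :: "nat \<Rightarrow> nat \<Rightarrow> nat \<Rightarrow> real"
  pC :: "nat \<Rightarrow> nat \<Rightarrow> nat \<Rightarrow> real"
  pU :: "nat \<Rightarrow> nat \<Rightarrow> nat \<Rightarrow> real"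
  pV :: "nat \<Rightarrow> nat \<Rightarrow> nat \<Rightarrow> real"

definition relu :: "real \<Rightarrow> real" where
  "relu r = max 0 r"

definition mv :: "nat \<Rightarrow> (nat \<Rightarrow> nat \<Rightarrow> real) \<Rightarrow> (nat \<Rightarrow> real) \<Rightarrow> nat \<Rightarrow> real" where
  "mv d M x = (\<lambda>k. \<Sum>j<d. M k j * x j)"

definition mv2 :: "nat \<Rightarrow> (nat \<Rightarrow> nat \<Rightarrow> real) \<Rightarrow> (nat \<Rightarrow> real) \<Rightarrow> (nat \<Rightarrow> real) \<Rightarrow> nat \<Rightarrow> real" where
  "mv2 d M x y = (\<lambda>k. (\<Sum>j<d. M k j * x j) + (\<Sum>j<d. M k (d + j) * y j))"

fun feat :: "nat \<Rightarrow> gnn_params \<Rightarrow> 'a set set \<Rightarrow> nat \<Rightarrow> 'a \<times> 'a \<Rightarrow> nat \<Rightarrow> real" where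
  "feat d P E 0 (u, v) = (\<lambda>k. if k = 0 then 1 else 0)"
| "feat d P E (Suc i) (u, v) =
     (let l = Suc i;
          f = feat d P E i;
          \<alpha> = (\<lambda>k. \<Sum>x\<in>nbhd E u. relu (mv d (pA P l) (f (u, x)) k + pa P l k));
          \<beta> = (\<lambda>k. \<Sum>y\<in>nbhd E u \<inter> nbhd E v.
                   relu (mv2 d (pB P l) (f (u, y)) (f (v, y)) k + pb P l k));
          \<gamma> = (\<lambda>k. \<Sum>z\<in>nbhd E v. relu (mv d (pC P l) (f (v, z)) k + pc P l k));
          g = (\<lambda>k. f (u, v) k + \<alpha> k + \<beta> k + \<gamma> k);
          h = (\<lambda>k. relu (mv d (pU P l) g k + pu P l k))
      in (\<lambda>k. g k + mv d (pV P l) h k + pv P l k))"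

definition gnn_out :: "nat \<Rightarrow> nat \<Rightarrow> gnn_params \<Rightarrow> 'a set set \<Rightarrow> nat \<Rightarrow> real" where
  "gnn_out d t P E = (\<lambda>k. \<Sum>e\<in>oedges E. feat d P E t e k)"

definition gnn_differs :: "nat \<Rightarrow> nat \<Rightarrow> gnn_params \<Rightarrow> 'a set set \<Rightarrow> 'b set set \<Rightarrow> bool" where
  "gnn_differs d t P G H \<longleftrightarrow> (\<exists>k<d. gnn_out d t P G k \<noteq> gnn_out d t P H k)"

end

theory Submission
  imports Defs
begin

definition onehot :: "nat \<Rightarrow> nat \<Rightarrow> real" where
  "onehot c k = (if k = c then 1 else 0)"

definition hat :: "real \<Rightarrow> real" where
  "hat z = relu (z + 1) - 2 * relu z + relu (z - 1)"

lemma hat_int: "hat (of_int z) = (if z = 0 then 1 else 0)"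
proof -
  consider "z \<le> -1" | "z = 0" | "z \<ge> 1" by linarith
  then show ?thesis
  proof cases
    case 1
    then have "(of_int z::real) \<le> -1" by simp
    then show ?thesis using 1 by (simp add: hat_def relu_def)
  next
    case 3
    then have "(of_int z::real) \<ge> 1" by simp
    then show ?thesis using 3 by (simp add: hat_def relu_def)
  qed (simp add: hat_def relu_def)
qed

lemma relu_onehot[simp]: "relu (onehot c k) = onehot c k"
  by (simp add: relu_def onehot_def)

lemma relu_0[simp]: "relu 0 = 0" by (simp add: relu_def)

lemma relu_nonneg: "x \<ge> 0 \<Longrightarrow> relu x = x" by (simp add: relu_def)

lemma cnt: "real (count (image_mset g (mset_set A)) y) = (\<Sum>x\<in>A. if y = g x then 1 else 0)"
proof (cases "finite A")
  case True
  then show ?thesis by (induction A rule: finite_induct) auto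
qed simp

fun Gvec :: "nat \<Rightarrow> (color \<Rightarrow> nat) \<Rightarrow> color \<Rightarrow> nat \<Rightarrow> nat" where
  "Gvec N ix Init k = 0"
| "Gvec N ix (Col a M Pm Q) k =
    (if k < N then (if k = ix a then 1 else 0)
     else if k < 2*N then count (image_mset ix M) (k - N)
     else if k < 2*N + N*N then count (image_mset (\<lambda>(x,y). ix x * N + ix y) Pm) (k - 2*N)
     else if k < 3*N + N*N then count (image_mset ix Q) (k - (2*N + N*N))
     else 0)"

definition Dd :: "nat \<Rightarrow> nat" where "Dd N = 3*N + N*N"
definition dd :: "nat \<Rightarrow> nat" where "dd N = Dd N + 3*N"

definition SS :: "nat \<Rightarrow> real \<Rightarrow> (color \<Rightarrow> nat) \<Rightarrow> color \<Rightarrow> real" where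
  "SS N K ix col = (\<Sum>j<Dd N. K^j * real (Gvec N ix col j))"

definition Am :: "nat \<Rightarrow> nat \<Rightarrow> nat \<Rightarrow> real" where
  "Am N k j = (if N \<le> k \<and> k < 2*N \<and> j = k - N then 1 else 0)"
definition Bm :: "nat \<Rightarrow> nat \<Rightarrow> nat \<Rightarrow> real" where
  "Bm N k j = (if 2*N \<le> k \<and> k < 2*N + N*N \<and> (j = (k - 2*N) div N \<or> j = dd N + (k - 2*N) mod N) then 1 else 0)"
definition bv :: "nat \<Rightarrow> nat \<Rightarrow> real" where
  "bv N k = (if 2*N \<le> k \<and> k < 2*N + N*N then -1 else 0)"
definition Cm :: "nat \<Rightarrow> nat \<Rightarrow> nat \<Rightarrow> real" where
  "Cm N k j = (if 2*N + N*N \<le> k \<and> k < Dd N \<and> j = k - (2*N + N*N) then 1 else 0)"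
definition Um :: "nat \<Rightarrow> real \<Rightarrow> nat \<Rightarrow> nat \<Rightarrow> real" where
  "Um N K m j = (if m < Dd N then (if j = m then 1 else 0)
      else if m < dd N then (if j < Dd N then K^j else 0) else 0)"
definition uv :: "nat \<Rightarrow> (nat \<Rightarrow> real) \<Rightarrow> nat \<Rightarrow> real" where
  "uv N \<sigma> m = (if Dd N \<le> m \<and> m < dd N then 1 - real ((m - Dd N) mod 3) - \<sigma> ((m - Dd N) div 3) else 0)"
definition Vm :: "nat \<Rightarrow> nat \<Rightarrow> nat \<Rightarrow> real" where
  "Vm N k m = (if k < Dd N \<and> m = k then -1 else 0) + (if k < N \<and> m = Dd N + 3*k then 1 else 0)
     + (if k < N \<and> m = Dd N + 3*k + 1 then -2 else 0) + (if k < N \<and> m = Dd N + 3*k + 2 then 1 else 0)"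

definition mkP :: "nat \<Rightarrow> real \<Rightarrow> (nat \<Rightarrow> nat \<Rightarrow> real) \<Rightarrow> gnn_params" where
  "mkP N K \<sigma> = \<lparr> pa = \<lambda>l k. 0, pb = \<lambda>l. bv N, pc = \<lambda>l k. 0, pu = \<lambda>l. uv N (\<sigma> (l - 1)),
     pv = \<lambda>l k. 0, pA = \<lambda>l. Am N, pB = \<lambda>l. Bm N, pC = \<lambda>l. Cm N, pU = \<lambda>l. Um N K, pV = \<lambda>l. Vm N \<rparr>"

lemma sum_delta_mult: "(\<Sum>j<(n::nat). (if j = a then c else 0) * x j) = (if a < n then c * x a else (0::real))"
proof -
  have "(\<Sum>j<n. (if j = a then c else 0) * x j) = (\<Sum>j<n. if j = a then c * x j else 0)"
    by (rule sum.cong) auto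
  also have "\<dots> = (if a < n then c * x a else 0)" using sum.delta[of "{..<n}" a "\<lambda>j. c * x j"] by simp
  finally show ?thesis .
qed

lemma sum_delta_mult2: "(\<Sum>j<(n::nat). (if j = a then c else 0) * x j + (if j = b then c' else 0) * x j)
   = (if a < n then c * x a else 0) + (if b < n then c' * x b else (0::real))"
  by (simp add: sum.distrib sum_delta_mult)

lemma mv_Am: "k < 2*N \<Longrightarrow> mv (dd N) (Am N) x k = (if N \<le> k then x (k - N) else 0)"
proof (cases "N \<le> k")
  case True
  assume k: "k < 2*N"
  have "Am N k = (\<lambda>j. if j = k - N then 1 else 0)" using True k by (auto simp: Am_def)
  moreover have "k - N < dd N" using k by (simp add: dd_def Dd_def)
  ultimately show ?thesis using True k by (simp add: mv_def sum_delta_mult)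
qed (simp add: mv_def Am_def)

lemma mv_Cm: "k < Dd N \<Longrightarrow> mv (dd N) (Cm N) x k = (if 2*N + N*N \<le> k then x (k - (2*N + N*N)) else 0)"
proof (cases "2*N + N*N \<le> k")
  case True
  assume k: "k < Dd N"
  have "Cm N k = (\<lambda>j. if j = k - (2*N + N*N) then 1 else 0)" using True k by (auto simp: Cm_def)
  moreover have "k - (2*N + N*N) < dd N" using k by (simp add: dd_def Dd_def)
  ultimately show ?thesis using True k by (simp add: mv_def sum_delta_mult)
qed (simp add: mv_def Cm_def)

lemma mv2_Bm: "k < 2*N + N*N \<Longrightarrow> mv2 (dd N) (Bm N) x y k =
   (if 2*N \<le> k then x ((k - 2*N) div N) + y ((k - 2*N) mod N) else 0)"
proof (cases "2*N \<le> k")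
  case True
  assume k: "k < 2*N + N*N"
  have Np: "N > 0" using k True by (cases N) auto
  have dv: "(k - 2*N) div N < N" using k True Np by (simp add: less_mult_imp_div_less)
  have md: "(k - 2*N) mod N < N" using Np by simp
  have dN: "N \<le> dd N" by (simp add: dd_def Dd_def)
  have 1: "(\<lambda>j. Bm N k j) = (\<lambda>j. if j = (k - 2*N) div N \<or> j = dd N + (k - 2*N) mod N then 1 else 0)"
    using True k by (auto simp: Bm_def)
  have a: "(\<Sum>j<dd N. Bm N k j * x j) = x ((k - 2*N) div N)"
  proof -
    have "(\<Sum>j<dd N. Bm N k j * x j) = (\<Sum>j<dd N. (if j = (k - 2*N) div N then 1 else 0) * x j)"
      by (rule sum.cong) (auto simp: 1)
    then show ?thesis using dv dN by (simp add: sum_delta_mult)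
  qed
  have b: "(\<Sum>j<dd N. Bm N k (dd N + j) * y j) = y ((k - 2*N) mod N)"
  proof -
    have "(\<Sum>j<dd N. Bm N k (dd N + j) * y j) = (\<Sum>j<dd N. (if j = (k - 2*N) mod N then 1 else 0) * y j)"
      by (rule sum.cong) (use dv dN in \<open>auto simp: 1\<close>)
    then show ?thesis using md dN by (simp add: sum_delta_mult)
  qed
  show ?thesis using a b True by (simp add: mv2_def)
qed (simp add: mv2_def Bm_def)

lemma feat_Suc_unfold:
  fixes E :: "'a set set" and N i :: nat and K :: real and \<sigma> :: "nat \<Rightarrow> nat \<Rightarrow> real" and u v :: 'a and k :: nat
  defines "d \<equiv> dd N" and "P \<equiv> mkP N K \<sigma>"
  defines "f \<equiv> feat d P E i"
  defines "\<alpha> \<equiv> (\<lambda>k. \<Sum>x\<in>nbhd E u. relu (mv d (Am N) (f (u, x)) k))"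
  defines "\<beta> \<equiv> (\<lambda>k. \<Sum>y\<in>nbhd E u \<inter> nbhd E v. relu (mv2 d (Bm N) (f (u, y)) (f (v, y)) k + bv N k))"
  defines "\<gamma> \<equiv> (\<lambda>k. \<Sum>z\<in>nbhd E v. relu (mv d (Cm N) (f (v, z)) k))"
  defines "g \<equiv> (\<lambda>k. f (u, v) k + \<alpha> k + \<beta> k + \<gamma> k)"
  defines "h \<equiv> (\<lambda>k. relu (mv d (Um N K) g k + uv N (\<sigma> i) k))"
  shows "feat d P E (Suc i) (u, v) k = g k + mv d (Vm N) h k"
  unfolding assms by (simp add: Let_def mkP_def)

lemma mv_Am_all: "mv (dd N) (Am N) x k = (if N \<le> k \<and> k < 2*N then x (k - N) else 0)"
proof (cases "k < 2*N")
  case True then show ?thesis by (simp add: mv_Am)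
qed (simp add: mv_def Am_def)

lemma mv_Cm_all: "mv (dd N) (Cm N) x k = (if 2*N + N*N \<le> k \<and> k < Dd N then x (k - (2*N + N*N)) else 0)"
proof (cases "k < Dd N")
  case True then show ?thesis by (simp add: mv_Cm)
qed (simp add: mv_def Cm_def)

lemma mv2_Bm_all: "mv2 (dd N) (Bm N) x y k + bv N k =
   (if 2*N \<le> k \<and> k < 2*N + N*N then x ((k - 2*N) div N) + y ((k - 2*N) mod N) - 1 else 0)"
proof (cases "k < 2*N + N*N")
  case True then show ?thesis by (simp add: mv2_Bm bv_def)
qed (simp add: mv2_def Bm_def bv_def)

lemma divmod_iff: "(b::nat) < N \<Longrightarrow> (q = a * N + b) \<longleftrightarrow> (q div N = a \<and> q mod N = b)"
  by (metis add.commute div_mult_self1 div_less less_nat_zero_code mod_mult_self1 mod_less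
      mult.commute add_0 div_mult_mod_eq)

lemma relu_pair: "relu (onehot a p + onehot b q - 1) = (if p = a \<and> q = b then 1 else 0)"
  by (simp add: relu_def onehot_def)

lemma nb_oe: "x \<in> nbhd E u \<Longrightarrow> (u, x) \<in> oedges E"
  by (simp add: nbhd_def oedges_def)

lemma step_g:
  fixes E :: "'a set set" and N i :: nat and K :: real and \<sigma> :: "nat \<Rightarrow> nat \<Rightarrow> real" and u v :: 'a
    and ix :: "color \<Rightarrow> nat"
  defines "d \<equiv> dd N" and "P \<equiv> mkP N K \<sigma>"
  defines "f \<equiv> feat d P E i"
  defines "\<alpha> \<equiv> (\<lambda>k. \<Sum>x\<in>nbhd E u. relu (mv d (Am N) (f (u, x)) k))"
  defines "\<beta> \<equiv> (\<lambda>k. \<Sum>y\<in>nbhd E u \<inter> nbhd E v. relu (mv2 d (Bm N) (f (u, y)) (f (v, y)) k + bv N k))"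
  defines "\<gamma> \<equiv> (\<lambda>k. \<Sum>z\<in>nbhd E v. relu (mv d (Cm N) (f (v, z)) k))"
  defines "g \<equiv> (\<lambda>k. f (u, v) k + \<alpha> k + \<beta> k + \<gamma> k)"
  assumes IH: "\<And>e k. e \<in> oedges E \<Longrightarrow> k < d \<Longrightarrow> f e k = onehot (ix (eb E i e)) k"
    and ixN: "\<And>e. e \<in> oedges E \<Longrightarrow> ix (eb E i e) < N"
    and uvE: "(u, v) \<in> oedges E"
    and k: "k < d"
  shows "g k = real (Gvec N ix (eb E (Suc i) (u, v)) k)"
proof -
  have dN: "Dd N \<le> d" "3*N + N*N \<le> d" "2*N + N*N \<le> d" "2 * N \<le> d" "N \<le> d" by (auto simp: d_def dd_def Dd_def)
  have vE: "(v, u) \<in> oedges E" using uvE by (simp add: oedges_def insert_commute)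
  have hF: "f (u, v) k = (if k = ix (eb E i (u, v)) then 1 else 0)"
    using IH[OF uvE k] by (simp add: onehot_def)
  have hA: "\<alpha> k = (if N \<le> k \<and> k < 2*N then real (count (image_mset ix (image_mset (\<lambda>x. eb E i (u, x)) (mset_set (nbhd E u)))) (k - N)) else 0)"
  proof (cases "N \<le> k \<and> k < 2*N")
    case True
    have "\<alpha> k = (\<Sum>x\<in>nbhd E u. if k - N = ix (eb E i (u, x)) then 1 else 0)"
      unfolding \<alpha>_def
    proof (rule sum.cong)
      fix x assume x: "x \<in> nbhd E u"
      have "k - N < d" using True dN by linarith
      then show "relu (mv d (Am N) (f (u, x)) k) = (if k - N = ix (eb E i (u, x)) then 1 else 0)"
        using True IH[OF nb_oe[OF x]] by (simp add: d_def mv_Am_all onehot_def relu_def)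
    qed simp
    then show ?thesis using True by (simp add: cnt multiset.map_comp comp_def)
  next
    case False then show ?thesis by (auto simp add: \<alpha>_def d_def mv_Am_all)
  qed
  have hC: "\<gamma> k = (if 2*N + N*N \<le> k \<and> k < Dd N then real (count (image_mset ix (image_mset (\<lambda>x. eb E i (v, x)) (mset_set (nbhd E v)))) (k - (2*N + N*N))) else 0)"
  proof (cases "2*N + N*N \<le> k \<and> k < Dd N")
    case True
    have "\<gamma> k = (\<Sum>x\<in>nbhd E v. if k - (2*N + N*N) = ix (eb E i (v, x)) then 1 else 0)"
      unfolding \<gamma>_def
    proof (rule sum.cong)
      fix x assume x: "x \<in> nbhd E v"
      have "k - (2*N + N*N) < d" using True dN by linarith
      then show "relu (mv d (Cm N) (f (v, x)) k) = (if k - (2*N + N*N) = ix (eb E i (v, x)) then 1 else 0)"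
        using True IH[OF nb_oe[OF x]] by (simp add: d_def mv_Cm_all onehot_def relu_def)
    qed simp
    then show ?thesis using True by (simp add: cnt multiset.map_comp comp_def)
  next
    case False then show ?thesis by (auto simp add: \<gamma>_def d_def mv_Cm_all)
  qed
  have hB: "\<beta> k = (if 2*N \<le> k \<and> k < 2*N + N*N then real (count (image_mset (\<lambda>(x,y). ix x * N + ix y)
      (image_mset (\<lambda>y. (eb E i (u, y), eb E i (v, y))) (mset_set (nbhd E u \<inter> nbhd E v)))) (k - 2*N)) else 0)"
  proof (cases "2*N \<le> k \<and> k < 2*N + N*N")
    case True
    have Np: "N > 0" using True by (cases N) auto
    have dv: "(k - 2*N) div N < d" "(k - 2*N) mod N < d" using Np dN True
      by (auto simp: less_mult_imp_div_less intro: order.strict_trans2[of _ N])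
    have "\<beta> k = (\<Sum>y\<in>nbhd E u \<inter> nbhd E v. if k - 2*N = ix (eb E i (u, y)) * N + ix (eb E i (v, y)) then 1 else 0)"
      unfolding \<beta>_def
    proof (rule sum.cong)
      fix y assume y: "y \<in> nbhd E u \<inter> nbhd E v"
      have e1: "(u, y) \<in> oedges E" "(v, y) \<in> oedges E" using y by (auto simp: nb_oe)
      show "relu (mv2 d (Bm N) (f (u, y)) (f (v, y)) k + bv N k) =
         (if k - 2*N = ix (eb E i (u, y)) * N + ix (eb E i (v, y)) then 1 else 0)"
        using True dv IH[OF e1(1)] IH[OF e1(2)] divmod_iff[OF ixN[OF e1(2)], of "k - 2*N" "ix (eb E i (u, y))"]
        by (simp add: d_def mv2_Bm_all relu_pair)
    qed simp
    then show ?thesis using True by (simp add: cnt multiset.map_comp comp_def case_prod_beta)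
  next
    case False then show ?thesis by (auto simp add: \<beta>_def d_def mv2_Bm_all)
  qed
  show ?thesis
    using hF hA hB hC ixN[OF uvE] k dN unfolding g_def
    by (auto simp: Dd_def)
qed

lemma Gvec_high: "3*N + N*N \<le> k \<Longrightarrow> Gvec N ix col k = 0"
  by (cases col) auto

lemma step:
  fixes E :: "'a set set" and N i :: nat and K :: real and \<sigma> :: "nat \<Rightarrow> nat \<Rightarrow> real" and u v :: 'a
    and ix ix' :: "color \<Rightarrow> nat"
  assumes IH: "\<And>e k. e \<in> oedges E \<Longrightarrow> k < dd N \<Longrightarrow> feat (dd N) (mkP N K \<sigma>) E i e k = onehot (ix (eb E i e)) k"
    and ixN: "\<And>e. e \<in> oedges E \<Longrightarrow> ix (eb E i e) < N"
    and uvE: "(u, v) \<in> oedges E"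
    and hatH: "\<And>c. c < N \<Longrightarrow> hat (SS N K ix (eb E (Suc i) (u, v)) - \<sigma> i c) = onehot (ix' (eb E (Suc i) (u, v))) c"
    and ix'N: "ix' (eb E (Suc i) (u, v)) < N"
    and k: "k < dd N"
  shows "feat (dd N) (mkP N K \<sigma>) E (Suc i) (u, v) k = onehot (ix' (eb E (Suc i) (u, v))) k"
proof -
  define d where "d = dd N"
  define P where "P = mkP N K \<sigma>"
  define f where "f = feat d P E i"
  define \<alpha> where "\<alpha> = (\<lambda>k. \<Sum>x\<in>nbhd E u. relu (mv d (Am N) (f (u, x)) k))"
  define \<beta> where "\<beta> = (\<lambda>k. \<Sum>y\<in>nbhd E u \<inter> nbhd E v. relu (mv2 d (Bm N) (f (u, y)) (f (v, y)) k + bv N k))"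
  define \<gamma> where "\<gamma> = (\<lambda>k. \<Sum>z\<in>nbhd E v. relu (mv d (Cm N) (f (v, z)) k))"
  define g where "g = (\<lambda>k. f (u, v) k + \<alpha> k + \<beta> k + \<gamma> k)"
  define h where "h = (\<lambda>k. relu (mv d (Um N K) g k + uv N (\<sigma> i) k))"
  define col where "col = eb E (Suc i) (u, v)"
  have unf: "feat d P E (Suc i) (u, v) k = g k + mv d (Vm N) h k"
    unfolding h_def g_def \<alpha>_def \<beta>_def \<gamma>_def f_def d_def P_def by (rule feat_Suc_unfold)
  have gG: "\<And>k. k < d \<Longrightarrow> g k = real (Gvec N ix col k)"
    unfolding g_def \<alpha>_def \<beta>_def \<gamma>_def f_def d_def P_def col_def
    by (rule step_g) (use IH ixN uvE in auto)
  have dN: "d = Dd N + 3*N" "Dd N = 3*N + N*N" by (simp_all add: d_def dd_def Dd_def)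
  have h1: "h m = g m" if m: "m < Dd N" for m
  proof -
    have "mv d (Um N K) g m = (\<Sum>j<d. (if j = m then 1 else 0) * g j)"
      unfolding mv_def by (rule sum.cong) (use m in \<open>auto simp: Um_def\<close>)
    also have "\<dots> = g m" using m dN by (simp add: sum_delta_mult)
    finally show ?thesis using m gG[of m] dN by (simp add: h_def uv_def relu_def)
  qed
  have SSg: "(\<Sum>j<d. (if j < Dd N then K^j else 0) * g j) = SS N K ix col"
  proof -
    have "(\<Sum>j<d. (if j < Dd N then K^j else 0) * g j) = (\<Sum>j<Dd N. (if j < Dd N then K^j else 0) * g j)"
      by (rule sum.mono_neutral_right) (use dN in auto)
    also have "\<dots> = SS N K ix col" unfolding SS_def
      by (rule sum.cong) (use dN gG in auto)
    finally show ?thesis .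
  qed
  have h2: "h (Dd N + 3*c + r) = relu (SS N K ix col - \<sigma> i c + 1 - real r)" if c: "c < N" and r: "r < 3" for c r
  proof -
    have m: "Dd N \<le> Dd N + 3*c + r" "Dd N + 3*c + r < d" using c r dN by auto
    have "mv d (Um N K) g (Dd N + 3*c + r) = (\<Sum>j<d. (if j < Dd N then K^j else 0) * g j)"
      unfolding mv_def by (rule sum.cong) (use m dN in \<open>auto simp: Um_def d_def\<close>)
    also have "\<dots> = SS N K ix col" by (rule SSg)
    finally have a: "mv d (Um N K) g (Dd N + 3*c + r) = SS N K ix col" .
    have b: "(3*c + r) mod 3 = r" "(3*c + r) div 3 = c" using r by auto
    show ?thesis unfolding h_def using a b m by (simp add: uv_def dd_def d_def algebra_simps)
  qed
  have out: "mv d (Vm N) h k = (if k < Dd N then - h k else 0) +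
      (if k < N then h (Dd N + 3*k + 0) - 2 * h (Dd N + 3*k + 1) + h (Dd N + 3*k + 2) else 0)"
  proof -
    have "mv d (Vm N) h k = (\<Sum>j<d. (if j = k then (if k < Dd N then -1 else 0) else 0) * h j
       + (if j = Dd N + 3*k + 0 then (if k < N then 1 else 0) else 0) * h j
       + (if j = Dd N + 3*k + 1 then (if k < N then -2 else 0) else 0) * h j
       + (if j = Dd N + 3*k + 2 then (if k < N then 1 else 0) else 0) * h j)"
      unfolding mv_def by (rule sum.cong) (auto simp: Vm_def algebra_simps)
    also have "\<dots> = (if k < d then (if k < Dd N then -1 else 0) * h k else 0)
       + (if Dd N + 3*k + 0 < d then (if k < N then 1 else 0) * h (Dd N + 3*k + 0) else 0)
       + (if Dd N + 3*k + 1 < d then (if k < N then -2 else 0) * h (Dd N + 3*k + 1) else 0)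
       + (if Dd N + 3*k + 2 < d then (if k < N then 1 else 0) * h (Dd N + 3*k + 2) else 0)"
      by (simp only: sum.distrib sum_delta_mult)
    also have "\<dots> = (if k < Dd N then - h k else 0) +
      (if k < N then h (Dd N + 3*k + 0) - 2 * h (Dd N + 3*k + 1) + h (Dd N + 3*k + 2) else 0)"
      using k dN by (auto simp: d_def)
    finally show ?thesis .
  qed
  have kd: "k < d" using k by (simp add: d_def)
  have res: "g k + mv d (Vm N) h k = onehot (ix' col) k"
  proof (cases "k < N")
    case True
    have "g k + mv d (Vm N) h k = hat (SS N K ix col - \<sigma> i k)"
      using True out h1[of k] h2[of k 0] h2[of k 1] h2[of k 2] dN
      by (simp add: hat_def algebra_simps)
    then show ?thesis using hatH[OF True] by (simp add: col_def)
  next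
    case False
    then have oh: "onehot (ix' col) k = 0" using ix'N by (auto simp: onehot_def col_def)
    show ?thesis
    proof (cases "k < Dd N")
      case True
      then show ?thesis using False out h1[of k] oh by simp
    next
      case F2: False
      then show ?thesis using False out oh gG[OF kd] Gvec_high[of N k] dN by simp
    qed
  qed
  show ?thesis using unf res by (simp add: d_def P_def col_def)
qed

lemma invariant:
  fixes E :: "'a set set" and C :: "nat \<Rightarrow> color set" and idx :: "nat \<Rightarrow> color \<Rightarrow> nat"
  assumes inC: "\<And>i e. e \<in> oedges E \<Longrightarrow> eb E i e \<in> C i"
    and idxN: "\<And>i c. c \<in> C i \<Longrightarrow> idx i c < N"
    and idx0: "idx 0 Init = 0"
    and hatH: "\<And>i col c. col \<in> C (Suc i) \<Longrightarrow> c < N \<Longrightarrow>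
        hat (SS N K (idx i) col - \<sigma> i c) = onehot (idx (Suc i) col) c"
  shows "e \<in> oedges E \<Longrightarrow> k < dd N \<Longrightarrow> feat (dd N) (mkP N K \<sigma>) E i e k = onehot (idx i (eb E i e)) k"
proof (induction i arbitrary: e k)
  case 0
  obtain u v where e: "e = (u, v)" by (cases e)
  show ?case by (simp add: e idx0 onehot_def)
next
  case (Suc i)
  obtain u v where e: "e = (u, v)" by (cases e)
  have uvE: "(u,v) \<in> oedges E" using Suc.prems e by simp
  have A1: "\<And>e k. e \<in> oedges E \<Longrightarrow> k < dd N \<Longrightarrow> feat (dd N) (mkP N K \<sigma>) E i e k = onehot (idx i (eb E i e)) k"
    by (rule Suc.IH)
  have A2: "\<And>e. e \<in> oedges E \<Longrightarrow> idx i (eb E i e) < N" using idxN inC by blast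
  have A3: "\<And>c. c < N \<Longrightarrow> hat (SS N K (idx i) (eb E (Suc i) (u,v)) - \<sigma> i c) = onehot (idx (Suc i) (eb E (Suc i) (u,v))) c"
    using hatH inC uvE by blast
  have A4: "idx (Suc i) (eb E (Suc i) (u,v)) < N" using idxN inC uvE by blast
  show ?case unfolding e by (rule step[where ix="idx i" and ix'="idx (Suc i)" and E=E and N=N and K=K and \<sigma>=\<sigma> and i=i and u=u and v=v, OF A1 A2 uvE A3 A4]) (use Suc in auto)
qed

lemma sg_finite_verts: "simple_graph E \<Longrightarrow> finite (verts E)"
proof -
  assume "simple_graph E"
  then have "finite E" "\<And>e. e \<in> E \<Longrightarrow> finite e"
    by (auto simp: simple_graph_def intro: card_ge_0_finite)
  then show ?thesis unfolding verts_def by (rule finite_Union)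
qed

lemma oedges_Sigma: "oedges E = Sigma (verts E) (nbhd E)"
  by (auto simp: oedges_def verts_def nbhd_def)

lemma sg_finite_oedges: "simple_graph E \<Longrightarrow> finite (oedges E)"
proof -
  assume sg: "simple_graph E"
  have "oedges E \<subseteq> verts E \<times> verts E" by (auto simp: oedges_def verts_def)
  then show ?thesis using sg_finite_verts[OF sg] finite_subset by blast
qed

lemma card_nbhd_le: "simple_graph E \<Longrightarrow> card (nbhd E u) \<le> card (oedges E)"
proof -
  assume sg: "simple_graph E"
  have "card (nbhd E u) = card ((\<lambda>x. (u, x)) ` nbhd E u)" by (rule card_image[symmetric]) (auto simp: inj_on_def)
  also have "\<dots> \<le> card (oedges E)" by (rule card_mono) (use sg_finite_oedges[OF sg] in \<open>auto simp: nb_oe\<close>)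
  finally show ?thesis .
qed

lemma nbhd_nonempty: "simple_graph E \<Longrightarrow> u \<in> verts E \<Longrightarrow> nbhd E u \<noteq> {}"
proof -
  assume sg: "simple_graph E" and u: "u \<in> verts E"
  then obtain e where e: "e \<in> E" "u \<in> e" by (auto simp: verts_def)
  then obtain x y where xy: "e = {x, y}" "x \<noteq> y" using sg by (auto simp: simple_graph_def card_2_iff)
  show ?thesis
  proof (cases "u = x")
    case True then show ?thesis using e xy by (auto simp: nbhd_def)
  next
    case False then have "u = y" using e xy by auto
    then have "{u, x} \<in> E" using e xy by (simp add: insert_commute)
    then show ?thesis by (auto simp: nbhd_def)
  qed
qed

lemma finite_nbhd: "simple_graph E \<Longrightarrow> finite (nbhd E u)"
proof -
  assume sg: "simple_graph E"
  have "nbhd E u \<subseteq> verts E" by (auto simp: nbhd_def verts_def)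
  then show ?thesis using sg_finite_verts[OF sg] finite_subset by blast
qed

fun vf :: "color \<Rightarrow> real" where
  "vf Init = 0"
| "vf (Col a M P Q) = 1 / real (size M)"

lemma verts_count: "simple_graph E \<Longrightarrow> real (card (verts E)) = sum_mset (image_mset vf (eb_colors E 1))"
proof -
  assume sg: "simple_graph E"
  have "sum_mset (image_mset vf (eb_colors E 1)) = (\<Sum>e\<in>oedges E. vf (eb E 1 e))"
    by (simp add: eb_colors_def sum_unfold_sum_mset multiset.map_comp comp_def)
  also have "\<dots> = (\<Sum>e\<in>oedges E. 1 / real (card (nbhd E (fst e))))"
    by (rule sum.cong) (auto simp: One_nat_def)
  also have "\<dots> = (\<Sum>(u,v)\<in>oedges E. 1 / real (card (nbhd E u)))" by (simp add: split_def)
  also have "\<dots> = (\<Sum>u\<in>verts E. \<Sum>v\<in>nbhd E u. 1 / real (card (nbhd E u)))"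
    unfolding oedges_Sigma
    by (rule sum.Sigma[symmetric]) (use sg_finite_verts[OF sg] finite_nbhd[OF sg] in auto)
  also have "\<dots> = (\<Sum>u\<in>verts E. 1)"
  proof (rule sum.cong)
    fix u assume "u \<in> verts E"
    then have "card (nbhd E u) > 0" using nbhd_nonempty[OF sg] finite_nbhd[OF sg] by (simp add: card_gt_0_iff)
    then show "(\<Sum>v\<in>nbhd E u. 1 / real (card (nbhd E u))) = 1" by simp
  qed simp
  finally show ?thesis by simp
qed

fun colpr :: "color \<Rightarrow> color" where
  "colpr Init = Init"
| "colpr (Col a M P Q) = a"

lemma eb_colors_pr: "eb_colors E l = image_mset colpr (eb_colors E (Suc l))"
proof -
  have "\<And>e. colpr (eb E (Suc l) e) = eb E l e" by (case_tac e) simp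
  then show ?thesis by (simp add: eb_colors_def multiset.map_comp comp_def)
qed

definition good :: "color set \<Rightarrow> nat \<Rightarrow> color \<Rightarrow> bool" where
  "good A B col \<longleftrightarrow> (\<exists>a M Pm Q. col = Col a M Pm Q \<and> a \<in> A \<and> set_mset M \<subseteq> A \<and> set_mset Pm \<subseteq> A \<times> A
     \<and> set_mset Q \<subseteq> A \<and> size M \<le> B \<and> size Pm \<le> B \<and> size Q \<le> B)"

lemma good_eb:
  assumes sg: "simple_graph E" and uvE: "(u, v) \<in> oedges E" and sub: "eb E i ` oedges E \<subseteq> A"
    and B: "card (oedges E) \<le> B"
  shows "good A B (eb E (Suc i) (u, v))"
proof -
  have fu: "finite (nbhd E u)" and fv: "finite (nbhd E v)" using finite_nbhd[OF sg] by auto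
  have vE: "(v, u) \<in> oedges E" using uvE by (simp add: oedges_def insert_commute)
  have c1: "card (nbhd E u) \<le> B" "card (nbhd E v) \<le> B" using card_nbhd_le[OF sg] B le_trans by blast+
  have c2: "card (nbhd E u \<inter> nbhd E v) \<le> B" using card_mono[OF fu, of "nbhd E u \<inter> nbhd E v"] c1 by auto
  show ?thesis unfolding good_def
    using sub uvE fu fv c1 c2 by (auto simp: nb_oe)
qed

lemma Gvec_bound: "good A N col \<Longrightarrow> Gvec N ix col k < N + 2"
proof -
  assume "good A N col"
  then obtain a M Pm Q where c: "col = Col a M Pm Q" "size M \<le> N" "size Pm \<le> N" "size Q \<le> N"
    unfolding good_def by blast
  have "count (image_mset ix M) j < N + 2" for j using count_le_size[of "image_mset ix M" j] c by simp
  moreover have "count (image_mset ix Q) j < N + 2" for j using count_le_size[of "image_mset ix Q" j] c by simp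
  moreover have "count (image_mset (\<lambda>(x,y). ix x * N + ix y) Pm) j < N + 2" for j
    using count_le_size[of "image_mset (\<lambda>(x,y). ix x * N + ix y) Pm" j] c by simp
  ultimately show ?thesis using c by auto
qed

lemma image_mset_inj_eq:
  assumes "set_mset M \<subseteq> A" "set_mset M' \<subseteq> A" "inj_on f A" "image_mset f M = image_mset f M'"
  shows "M = M'"
proof -
  have "image_mset (inv_into A f) (image_mset f M) = M" if "set_mset M \<subseteq> A" for M
  proof -
    have "image_mset (inv_into A f) (image_mset f M) = image_mset (\<lambda>x. x) M"
      unfolding multiset.map_comp comp_def
      by (rule image_mset_cong) (use that assms(3) in \<open>auto simp: inv_into_f_f\<close>)
    then show ?thesis by simp
  qed
  then show ?thesis using assms by metis
qed

lemma mset_eq_counts: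
  assumes "\<And>j. j < B \<Longrightarrow> count X j = count Y j" "\<forall>x\<in>#X. x < (B::nat)" "\<forall>x\<in>#Y. x < B"
  shows "X = Y"
proof (rule multiset_eqI)
  fix j show "count X j = count Y j"
  proof (cases "j < B")
    case False
    then have "j \<notin># X" "j \<notin># Y" using assms(2,3) by auto
    then show ?thesis by (simp add: not_in_iff)
  qed (use assms(1) in auto)
qed

lemma Gvec_inj:
  assumes g1: "good A N col" and g2: "good A N col'" and inj: "inj_on ix A" and ixN: "\<forall>c\<in>A. ix c < N"
    and eq: "\<And>k. k < Dd N \<Longrightarrow> Gvec N ix col k = Gvec N ix col' k"
  shows "col = col'"
proof -
  obtain a M Pm Q where c: "col = Col a M Pm Q" "a \<in> A" "set_mset M \<subseteq> A" "set_mset Pm \<subseteq> A \<times> A" "set_mset Q \<subseteq> A"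
    using g1 unfolding good_def by blast
  obtain a' M' Pm' Q' where c': "col' = Col a' M' Pm' Q'" "a' \<in> A" "set_mset M' \<subseteq> A" "set_mset Pm' \<subseteq> A \<times> A" "set_mset Q' \<subseteq> A"
    using g2 unfolding good_def by blast
  have DN: "Dd N = 3*N + N*N" by (simp add: Dd_def)
  have "ix a < N" using ixN c by auto
  then have "Gvec N ix col (ix a) = Gvec N ix col' (ix a)" using eq DN by auto
  then have "ix a = ix a'" using c c' \<open>ix a < N\<close> by (auto split: if_splits)
  then have aa: "a = a'" using inj c c' by (auto dest: inj_onD)
  have MM: "image_mset ix M = image_mset ix M'"
  proof (rule mset_eq_counts[where B = N])
    fix j assume j: "j < N"
    have "Gvec N ix col (N + j) = Gvec N ix col' (N + j)" using eq DN j by auto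
    then show "count (image_mset ix M) j = count (image_mset ix M') j" using c c' j by simp
  qed (use c c' ixN in auto)
  have QQ: "image_mset ix Q = image_mset ix Q'"
  proof (rule mset_eq_counts[where B = N])
    fix j assume j: "j < N"
    have "Gvec N ix col (2*N + N*N + j) = Gvec N ix col' (2*N + N*N + j)" using eq DN j by auto
    then show "count (image_mset ix Q) j = count (image_mset ix Q') j" using c c' j by simp
  qed (use c c' ixN in auto)
  define pf where "pf = (\<lambda>(x::color, y::color). ix x * N + ix y)"
  have pfN: "pf p < N * N" if pA: "p \<in> A \<times> A" for p
  proof -
    obtain x y where p: "p = (x, y)" "x \<in> A" "y \<in> A" using pA by (cases p) auto
    have "ix x * N + ix y < ix x * N + N" using ixN p by auto
    also have "\<dots> = (ix x + 1) * N" by simp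
    also have "\<dots> \<le> N * N" by (rule mult_le_mono1) (use ixN p in auto)
    finally show ?thesis by (simp add: pf_def p)
  qed
  have pfinj: "inj_on pf (A \<times> A)"
  proof (rule inj_onI)
    fix p q assume p: "p \<in> A \<times> A" and q: "q \<in> A \<times> A" and e: "pf p = pf q"
    obtain x y where p': "p = (x, y)" using prod.exhaust by blast
    obtain x' y' where q': "q = (x', y')" using prod.exhaust by blast
    have "ix x = ix x' \<and> ix y = ix y'"
      using e divmod_iff[of "ix y'" N "ix x * N + ix y" "ix x'"] divmod_iff[of "ix y" N "ix x * N + ix y" "ix x"]
        ixN p q p' q' by (auto simp: pf_def)
    then show "p = q" using inj p q p' q' by (auto dest: inj_onD)
  qed
  have PP: "image_mset pf Pm = image_mset pf Pm'"
  proof (rule mset_eq_counts[where B = "N*N"])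
    fix j assume j: "j < N*N"
    have "Gvec N ix col (2*N + j) = Gvec N ix col' (2*N + j)" using eq DN j by auto
    then show "count (image_mset pf Pm) j = count (image_mset pf Pm') j" using c c' j by (simp add: pf_def)
  qed (use c c' pfN in auto)
  have "M = M'" by (rule image_mset_inj_eq[OF c(3) c'(3) inj MM])
  moreover have "Q = Q'" by (rule image_mset_inj_eq[OF c(5) c'(5) inj QQ])
  moreover have "Pm = Pm'" by (rule image_mset_inj_eq[OF c(4) c'(4) pfinj PP])
  ultimately show ?thesis using c c' aa by simp
qed

lemma base_inj:
  fixes a b :: "nat \<Rightarrow> nat"
  assumes "\<And>j. j < D \<Longrightarrow> a j < B" "\<And>j. j < D \<Longrightarrow> b j < B"
    and "(\<Sum>j<D. B^j * a j) = (\<Sum>j<D. B^j * b j)"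
  shows "\<forall>j<D. a j = b j"
  using assms
proof (induction D arbitrary: a b)
  case 0 then show ?case by simp
next
  case (Suc D)
  have sh: "(\<Sum>j<Suc D. B^j * c j) = c 0 + B * (\<Sum>j<D. B^j * c (Suc j))" for c :: "nat \<Rightarrow> nat"
    by (simp only: sum.lessThan_Suc_shift) (simp add: sum_distrib_left mult.assoc)
  have a0: "a 0 < B" "b 0 < B" using Suc.prems by auto
  have e: "a 0 + B * (\<Sum>j<D. B^j * a (Suc j)) = b 0 + B * (\<Sum>j<D. B^j * b (Suc j))"
    using Suc.prems(3) sh by metis
  have 0: "a 0 = b 0"
    using arg_cong[OF e, of "\<lambda>x. x mod B"] a0 by simp
  have Bp: "B > 0" using a0 by simp
  have r: "(\<Sum>j<D. B^j * a (Suc j)) = (\<Sum>j<D. B^j * b (Suc j))"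
    using e 0 Bp by simp
  have "\<forall>j<D. a (Suc j) = b (Suc j)"
    by (rule Suc.IH) (use Suc.prems r in auto)
  then show ?case using 0 by (auto simp: less_Suc_eq_0_disj)
qed

lemma set_eb_colors: "simple_graph E \<Longrightarrow> set_mset (eb_colors E l) = eb E l ` oedges E"
  by (simp add: eb_colors_def sg_finite_oedges)

lemma gnn_out_count:
  fixes E :: "'a set set"
  assumes inv: "\<And>e k. e \<in> oedges E \<Longrightarrow> k < dd N \<Longrightarrow> feat (dd N) P E t e k = onehot (ix (eb E t e)) k"
    and k: "k < dd N"
  shows "gnn_out (dd N) t P E k = real (count (image_mset ix (eb_colors E t)) k)"
proof -
  have "gnn_out (dd N) t P E k = (\<Sum>e\<in>oedges E. if k = ix (eb E t e) then 1 else 0)"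
    unfolding gnn_out_def by (rule sum.cong) (use inv k in \<open>auto simp: onehot_def\<close>)
  also have "\<dots> = real (count (image_mset ix (eb_colors E t)) k)"
    by (simp add: cnt eb_colors_def multiset.map_comp comp_def)
  finally show ?thesis .
qed

lemma exists_level:
  fixes G :: "'a set set" and H :: "'b set set"
  assumes sG: "simple_graph G" and sH: "simple_graph H" and dist: "eb_distinguishable G H"
  shows "\<exists>L\<ge>1. eb_colors G L \<noteq> eb_colors H L"
proof (cases "card (verts G) = card (verts H)")
  case False
  have "eb_colors G 1 \<noteq> eb_colors H 1"
  proof
    assume "eb_colors G 1 = eb_colors H 1"
    then have "real (card (verts G)) = real (card (verts H))"
      using verts_count[OF sG] verts_count[OF sH] by simp
    then show False using False by simp
  qed
  then show ?thesis by auto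
next
  case True
  then obtain l where l: "eb_colors G l \<noteq> eb_colors H l" using dist by (auto simp: eb_distinguishable_def)
  have "eb_colors G (Suc l) \<noteq> eb_colors H (Suc l)"
    using l eb_colors_pr[of G l] eb_colors_pr[of H l] by metis
  then show ?thesis by (intro exI[of _ "Suc l"]) auto
qed

theorem mainTheorem9:
  fixes G :: "'a set set" and H :: "'b set set"
  assumes "simple_graph G" and "simple_graph H"
    and "eb_distinguishable G H"
  shows "\<exists>d t P. d \<ge> 1 \<and> t \<ge> 1 \<and> gnn_differs d t P G H"
proof -
  note sG = assms(1) and sH = assms(2)
  obtain L where L: "L \<ge> 1" "eb_colors G L \<noteq> eb_colors H L" using exists_level[OF assms] by blast
  define OG where "OG = oedges G"
  define OH where "OH = oedges H"
  have fin: "finite OG" "finite OH" using sg_finite_oedges sG sH by (auto simp: OG_def OH_def)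
  define N where "N = card OG + card OH"
  have N1: "N \<ge> 1"
  proof (rule ccontr)
    assume "\<not> N \<ge> 1"
    then have "card OG = 0" "card OH = 0" by (auto simp: N_def)
    then have "OG = {}" "OH = {}" using fin by simp_all
    then show False using L by (simp add: eb_colors_def OG_def OH_def)
  qed
  define C where "C l = eb G l ` OG \<union> eb H l ` OH" for l
  have finC: "finite (C l)" for l using fin by (simp add: C_def)
  have cardC: "card (C l) \<le> N" for l
  proof -
    have "card (C l) \<le> card (eb G l ` OG) + card (eb H l ` OH)" unfolding C_def by (rule card_Un_le)
    also have "\<dots> \<le> N" using add_mono[OF card_image_le[OF fin(1)] card_image_le[OF fin(2)]] by (simp add: N_def)
    finally show ?thesis .
  qed
  have exf: "\<exists>f. inj_on f (C l) \<and> (\<forall>c\<in>C l. f c < N)" for l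
  proof -
    obtain f :: "color \<Rightarrow> nat" and n :: nat where f: "f ` C l = {i. i < n}" "inj_on f (C l)" using finite_imp_inj_to_nat_seg[OF finC] by blast
    have "n = card (C l)" using f card_image[OF f(2)] by simp
    have "\<forall>c\<in>C l. f c < N"
    proof
      fix c assume "c \<in> C l"
      then have "f c \<in> {i. i < n}" using f(1) by blast
      then have "f c < n" by simp
      then show "f c < N" using \<open>n = card (C l)\<close> cardC[of l] by linarith
    qed
    then show ?thesis using f by blast
  qed
  define idx where "idx l = (if l = 0 then (\<lambda>_. 0) else (SOME f. inj_on f (C l) \<and> (\<forall>c\<in>C l. f c < N)))" for l
  have C0: "C 0 \<subseteq> {Init}"
  proof -
    have "eb G 0 e = Init" for e by (cases e) simp
    moreover have "eb H 0 e = Init" for e by (cases e) simp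
    ultimately show ?thesis by (auto simp: C_def)
  qed
  have idx_inj: "inj_on (idx l) (C l)" for l
  proof (cases "l = 0")
    case True then show ?thesis using C0 by (auto simp: idx_def inj_on_def)
  next
    case False then show ?thesis using someI_ex[OF exf[of l]] by (simp add: idx_def)
  qed
  have idxN: "idx l c < N" if "c \<in> C l" for l c
  proof (cases "l = 0")
    case True then show ?thesis using N1 by (simp add: idx_def)
  next
    case False then show ?thesis using someI_ex[OF exf[of l]] that by (simp add: idx_def)
  qed
  define K :: real where "K = real (N + 2)"
  define SSn where "SSn l col = (\<Sum>j<Dd N. (N + 2)^j * Gvec N (idx l) col j)" for l col
  have SSeq: "SS N K (idx l) col = real (SSn l col)" for l col
    by (simp add: SS_def SSn_def K_def)
  have goodC: "good (C i) N col" if "col \<in> C (Suc i)" for i col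
  proof -
    from that have "col \<in> eb G (Suc i) ` OG \<or> col \<in> eb H (Suc i) ` OH" by (simp add: C_def)
    then show ?thesis
    proof
      assume "col \<in> eb G (Suc i) ` OG"
      then obtain u v where a: "(u, v) \<in> OG" "col = eb G (Suc i) (u, v)" by auto
      show ?thesis using a good_eb[OF sG, of u v i "C i" N] by (auto simp: OG_def C_def N_def)
    next
      assume "col \<in> eb H (Suc i) ` OH"
      then obtain u v where a: "(u, v) \<in> OH" "col = eb H (Suc i) (u, v)" by auto
      show ?thesis using a good_eb[OF sH, of u v i "C i" N] by (auto simp: OH_def C_def N_def)
    qed
  qed
  have SSinj: "col = col'" if c: "col \<in> C (Suc i)" "col' \<in> C (Suc i)" "SSn i col = SSn i col'" for i col col'
  proof (rule Gvec_inj[OF goodC[OF c(1)] goodC[OF c(2)] idx_inj])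
    show "\<forall>c\<in>C i. idx i c < N" using idxN by blast
    have "\<forall>j<Dd N. Gvec N (idx i) col j = Gvec N (idx i) col' j"
    proof (rule base_inj[where B = "N + 2"])
      show "\<And>j. j < Dd N \<Longrightarrow> Gvec N (idx i) col j < N + 2" by (rule Gvec_bound[OF goodC[OF c(1)]])
      show "\<And>j. j < Dd N \<Longrightarrow> Gvec N (idx i) col' j < N + 2" by (rule Gvec_bound[OF goodC[OF c(2)]])
      show "(\<Sum>j<Dd N. (N + 2) ^ j * Gvec N (idx i) col j) = (\<Sum>j<Dd N. (N + 2) ^ j * Gvec N (idx i) col' j)"
        using c(3) by (simp only: SSn_def)
    qed
    then show "\<And>k. k < Dd N \<Longrightarrow> Gvec N (idx i) col k = Gvec N (idx i) col' k" by blast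
  qed
  define \<sigma> where "\<sigma> i c = (if \<exists>col\<in>C (Suc i). idx (Suc i) col = c
      then real (SSn i (SOME col. col \<in> C (Suc i) \<and> idx (Suc i) col = c)) else -1)" for i c
  have hatH: "hat (SS N K (idx i) col - \<sigma> i c) = onehot (idx (Suc i) col) c"
    if col: "col \<in> C (Suc i)" and c: "c < N" for i col c
  proof (cases "\<exists>col\<in>C (Suc i). idx (Suc i) col = c")
    case True
    define col0 where "col0 = (SOME col. col \<in> C (Suc i) \<and> idx (Suc i) col = c)"
    have c0: "col0 \<in> C (Suc i)" "idx (Suc i) col0 = c" using someI_ex[of "\<lambda>col. col \<in> C (Suc i) \<and> idx (Suc i) col = c"] True
      by (auto simp: col0_def)
    have "hat (SS N K (idx i) col - \<sigma> i c) = hat (of_int (int (SSn i col) - int (SSn i col0)))"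
      using True by (simp add: SSeq \<sigma>_def col0_def)
    also have "\<dots> = (if SSn i col = SSn i col0 then 1 else 0)"
      using hat_int[of "int (SSn i col) - int (SSn i col0)"] by simp
    also have "\<dots> = (if col = col0 then 1 else 0)" using SSinj[OF col c0(1)] by auto
    also have "\<dots> = onehot (idx (Suc i) col) c"
      using c0 col idx_inj[of "Suc i"] by (auto simp: onehot_def dest: inj_onD)
    finally show ?thesis .
  next
    case False
    have "hat (SS N K (idx i) col - \<sigma> i c) = hat (of_int (int (SSn i col) + 1))"
      using False by (simp add: SSeq \<sigma>_def)
    also have "\<dots> = 0" by (simp only: hat_int) simp
    also have "\<dots> = onehot (idx (Suc i) col) c" using False col by (auto simp: onehot_def)
    finally show ?thesis .
  qed
  define P where "P = mkP N K \<sigma>"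
  have idx0: "idx 0 Init = 0" by (simp add: idx_def)
  have inCG: "\<And>i e. e \<in> oedges G \<Longrightarrow> eb G i e \<in> C i" by (simp add: C_def OG_def)
  have inCH: "\<And>i e. e \<in> oedges H \<Longrightarrow> eb H i e \<in> C i" by (simp add: C_def OH_def)
  have invG: "\<And>e k. e \<in> oedges G \<Longrightarrow> k < dd N \<Longrightarrow> feat (dd N) P G L e k = onehot (idx L (eb G L e)) k"
    unfolding P_def by (rule invariant[where C = C, OF inCG idxN idx0 hatH])
  have invH: "\<And>e k. e \<in> oedges H \<Longrightarrow> k < dd N \<Longrightarrow> feat (dd N) P H L e k = onehot (idx L (eb H L e)) k"
    unfolding P_def by (rule invariant[where C = C, OF inCH idxN idx0 hatH])
  have subG: "set_mset (eb_colors G L) \<subseteq> C L" using set_eb_colors[OF sG] by (auto simp: C_def OG_def)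
  have subH: "set_mset (eb_colors H L) \<subseteq> C L" using set_eb_colors[OF sH] by (auto simp: C_def OH_def)
  have neq: "image_mset (idx L) (eb_colors G L) \<noteq> image_mset (idx L) (eb_colors H L)"
    using image_mset_inj_eq[OF subG subH idx_inj] L(2) by blast
  then obtain k where k: "count (image_mset (idx L) (eb_colors G L)) k \<noteq> count (image_mset (idx L) (eb_colors H L)) k"
    using neq by (meson multiset_eqI)
  have kN: "k < N"
  proof (rule ccontr)
    assume "\<not> k < N"
    moreover have "\<forall>x\<in>#image_mset (idx L) (eb_colors G L). x < N" using subG idxN[of _ L] by auto
    moreover have "\<forall>x\<in>#image_mset (idx L) (eb_colors H L). x < N" using subH idxN[of _ L] by auto
    ultimately have "k \<notin># image_mset (idx L) (eb_colors G L)" "k \<notin># image_mset (idx L) (eb_colors H L)"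
      by auto
    then have "count (image_mset (idx L) (eb_colors G L)) k = 0" "count (image_mset (idx L) (eb_colors H L)) k = 0"
      by (simp_all only: not_in_iff)
    then show False using k by simp
  qed
  have kd: "k < dd N" using kN by (simp add: dd_def Dd_def)
  have "gnn_out (dd N) L P G k \<noteq> gnn_out (dd N) L P H k"
    using gnn_out_count[OF invG kd] gnn_out_count[OF invH kd] k by simp
  then have "gnn_differs (dd N) L P G H" using kd by (auto simp: gnn_differs_def)
  moreover have "dd N \<ge> 1" using N1 by (simp add: dd_def Dd_def)
  ultimately show ?thesis using L(1) by (intro exI[of _ "dd N"] exI[of _ L] exI[of _ P]) simp
qed

end
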